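(* Let $X$ be a random lifetime. (i) For all $t\in\mathcal S$, $$\overline H^w(t)\le \mu(t)\log\frac{t^2}{2\mu(t)}.$$ (ii) If the reversed hazard rate $\tau(t)$ is decreasing in $t\in\mathcal S$, then for all $t\in\mathcal S$, $$\overline H^w(t)\le \int_0^t x\,\tau(x)\,dx-\mu(t)\,\big[1+\log\tau(t)\big].$$
   Context: $X$ is an absolutely continuous non-negative random variable with density $f$, support $\mathcal S=(0,\nu)$, $\nu\le+\infty$, distribution function $F$ and reversed hazard rate $\tau(t)=f(t)/F(t)$; "decreasing" means non-increasing; $\log$ is the natural logarithm. Weighted past entropy: $\overline H^w(t)=-\int_0^{t}x\,\frac{f(x)}{F(t)}\log\frac{f(x)}{F(t)}\,dx$. Mean past lifetime: $\mu(t)=\mathrm{E}(X\mid X\le t)=\int_0^t x\frac{f(x)}{F(t)}\,dx$. *)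

theory Defs
  imports "HOL-Analysis.Analysis"
begin

text \<open>Lifetime with density f; support (0,nu) with nu an extended real (possibly infinity).\<close>

definition in_supp :: "ereal \<Rightarrow> real \<Rightarrow> bool" where
  "in_supp \<nu> x \<longleftrightarrow> 0 < x \<and> ereal x < \<nu>"

text \<open>Distribution function F(t) = integral of f over (0,t] (f vanishes off (0,nu)).\<close>
definition cdf :: "(real \<Rightarrow> real) \<Rightarrow> real \<Rightarrow> real" where
  "cdf f t = (LINT x:{0<..t}|lborel. f x)"

definition rhr :: "(real \<Rightarrow> real) \<Rightarrow> real \<Rightarrow> real" where
  "rhr f t = f t / cdf f t"

definition wpast_entropy :: "(real \<Rightarrow> real) \<Rightarrow> real \<Rightarrow> real" where
  "wpast_entropy f t =
     - (LINT x:{0<..<t}|lborel. x * (f x / cdf f t) * ln (f x / cdf f t))"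

definition mean_past :: "(real \<Rightarrow> real) \<Rightarrow> real \<Rightarrow> real" where
  "mean_past f t = (LINT x:{0<..<t}|lborel. x * (f x / cdf f t))"

end

theory Submission
  imports Defs
begin

lemma pos_set_int:
  fixes h :: "real \<Rightarrow> real"
  assumes int: "set_integrable lborel A h" and A: "A \<in> sets borel"
    and mA: "emeasure lborel A \<noteq> 0" and hp: "\<And>x. x \<in> A \<Longrightarrow> 0 < h x"
  shows "0 < (LINT x:A|lborel. h x)"
proof -
  have i: "integrable lborel (\<lambda>x. indicator A x * h x)"
    using int by (simp add: set_integrable_def)
  have nn: "AE x in lborel. 0 \<le> indicator A x * h x"
    using hp by (auto split: split_indicator intro: less_imp_le)
  have ge: "0 \<le> (LINT x:A|lborel. h x)"
    unfolding set_lebesgue_integral_def using integral_nonneg_AE[OF nn] by simp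
  moreover have "(LINT x:A|lborel. h x) \<noteq> 0"
  proof
    assume "(LINT x:A|lborel. h x) = 0"
    then have "integral\<^sup>L lborel (\<lambda>x. indicator A x * h x) = 0"
      by (simp add: set_lebesgue_integral_def)
    then have "AE x in lborel. indicator A x * h x = 0"
      using integral_nonneg_eq_0_iff_AE[OF i nn] by simp
    then have "AE x in lborel. x \<notin> A"
      by eventually_elim (use hp in \<open>auto split: split_indicator\<close>, fastforce)
    then have "A \<in> null_sets lborel" using A by (subst AE_iff_null_sets) auto
    then show False using mA by auto
  qed
  ultimately show ?thesis by linarith
qed

lemma int_x: assumes "0 < t" shows "set_integrable lborel {0<..<t} (\<lambda>x::real. x)"
  and "(LINT x:{0<..<t}|lborel. x) = t^2/2"
proof -
  have "set_integrable lborel {0..t} (\<lambda>x::real. x)"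
    by (rule borel_integrable_atLeastAtMost') (intro continuous_intros)
  then show "set_integrable lborel {0<..<t} (\<lambda>x::real. x)"
    by (rule set_integrable_subset) auto
  have "(LBINT x=ereal 0..ereal t. x) = t^2/2 - 0^2/2"
    by (rule interval_integral_FTC_finite) (use assms in \<open>auto intro!: continuous_intros derivative_eq_intros simp: power2_eq_square\<close>)
  then show "(LINT x:{0<..<t}|lborel. x) = t^2/2"
    using assms by (simp add: interval_lebesgue_integral_def)
qed

lemma main:
  fixes f :: "real \<Rightarrow> real" and \<nu> :: ereal
  assumes f_meas: "f \<in> borel_measurable borel"
    and f_nonneg: "\<And>x. 0 \<le> f x"
    and f_pos: "\<And>x. in_supp \<nu> x \<Longrightarrow> 0 < f x"
    and f_int: "integrable lborel f"
  shows
    "(\<forall>t. in_supp \<nu> t \<and>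
          set_integrable lborel {0<..<t} (\<lambda>x. x * (f x / cdf f t) * ln (f x / cdf f t))
        \<longrightarrow> wpast_entropy f t \<le> mean_past f t * ln (t\<^sup>2 / (2 * mean_past f t)))
     \<and>
     ((\<forall>s t. in_supp \<nu> s \<and> in_supp \<nu> t \<and> s \<le> t \<longrightarrow> rhr f t \<le> rhr f s) \<longrightarrow>
      (\<forall>t. in_supp \<nu> t \<and>
          set_integrable lborel {0<..<t} (\<lambda>x. x * (f x / cdf f t) * ln (f x / cdf f t)) \<and>
          set_integrable lborel {0<..<t} (\<lambda>x. x * rhr f x)
        \<longrightarrow> wpast_entropy f t \<le>
              (LINT x:{0<..<t}|lborel. x * rhr f x) - mean_past f t * (1 + ln (rhr f t))))"
proof -
  note [measurable] = f_meas
  have supp_le: "in_supp \<nu> y" if "in_supp \<nu> t" "0 < y" "y \<le> t" for y t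
    using that unfolding in_supp_def by (meson ereal_less_eq(3) order.strict_trans1)
  have Fpos: "0 < cdf f t" if t: "in_supp \<nu> t" for t
  proof -
    have t0: "0 < t" using t by (simp add: in_supp_def)
    have "set_integrable lborel {0<..t} f"
      unfolding set_integrable_def by (rule integrable_mult_indicator) (auto simp: f_int)
    moreover have "emeasure lborel {0<..t} \<noteq> 0" using t0 by simp
    ultimately show ?thesis unfolding cdf_def
      by (intro pos_set_int) (auto intro: f_pos supp_le[OF t])
  qed
  have fI: "set_integrable lborel {0<..<t} f" for t
    unfolding set_integrable_def by (rule integrable_mult_indicator) (auto simp: f_int)
  have muI: "set_integrable lborel {0<..<t} (\<lambda>x. x * (f x / cdf f t))" if t: "in_supp \<nu> t" for t
  proof (rule set_integrable_bound[OF set_integrable_mult_left[of "t / cdf f t", OF fI[of t]]])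
    show "set_borel_measurable lborel {0<..<t} (\<lambda>x. x * (f x / cdf f t))"
      unfolding set_borel_measurable_def by measurable
    show "AE x in lborel. x \<in> {0<..<t} \<longrightarrow> norm (x * (f x / cdf f t)) \<le> norm (f x * (t / cdf f t))"
      using Fpos[OF t] f_nonneg by (auto intro!: always_eventually simp: abs_mult field_simps mult_right_mono)
  qed
  have mupos: "0 < mean_past f t" if t: "in_supp \<nu> t" for t
    unfolding mean_past_def
    apply (rule pos_set_int[OF muI[OF t]])
    using t Fpos[OF t] by (auto simp: in_supp_def intro!: f_pos supp_le[OF t] mult_pos_pos divide_pos_pos)
  have part1: "wpast_entropy f t \<le> mean_past f t * ln (t\<^sup>2 / (2 * mean_past f t))"
    if t: "in_supp \<nu> t" and hI: "set_integrable lborel {0<..<t} (\<lambda>x. x * (f x / cdf f t) * ln (f x / cdf f t))" for t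
  proof -
    define F where "F = cdf f t"
    define \<mu> where "\<mu> = mean_past f t"
    define c where "c = 2 * \<mu> / t^2"
    have t0: "0 < t" using t by (simp add: in_supp_def)
    have F0: "0 < F" using Fpos[OF t] by (simp add: F_def)
    have mu0: "0 < \<mu>" using mupos[OF t] by (simp add: \<mu>_def)
    have c0: "0 < c" using mu0 t0 by (simp add: c_def)
    have pw: "- (x * (f x / F) * ln (f x / F)) \<le> c * x - x * (f x / F) * (1 + ln c)"
      if x: "x \<in> {0<..<t}" for x
    proof -
      define g where "g = f x / F"
      have g0: "0 < g" unfolding g_def using F0 x by (auto intro!: f_pos supp_le[OF t] divide_pos_pos)
      have "ln (c / g) \<le> c / g - 1" using c0 g0 by (intro ln_le_minus_one) simp
      then have "ln c - ln g \<le> c / g - 1" using c0 g0 by (simp add: ln_div)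
      then have "x * g * (ln c - ln g) \<le> x * g * (c / g - 1)"
        using x g0 by (intro mult_left_mono) auto
      moreover have "x * g * (c / g - 1) = c * x - x * g" using g0 by (simp add: field_simps)
      ultimately have "- (x * g * ln g) \<le> c * x - x * g * (1 + ln c)"
        by (simp add: algebra_simps)
      then show ?thesis by (simp add: g_def)
    qed
    have xI: "set_integrable lborel {0<..<t} (\<lambda>x::real. x)" using int_x[OF t0] by simp
    have "wpast_entropy f t = (LINT x:{0<..<t}|lborel. - (x * (f x / F) * ln (f x / F)))"
      unfolding wpast_entropy_def F_def using hI by (simp add: set_integral_uminus)
    also have "\<dots> \<le> (LINT x:{0<..<t}|lborel. c * x - x * (f x / F) * (1 + ln c))"
    proof (rule set_integral_mono)
      show "set_integrable lborel {0<..<t} (\<lambda>x. - (x * (f x / F) * ln (f x / F)))"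
        using set_integrable_mult_right[of "-1", OF hI] by (simp add: F_def)
      show "set_integrable lborel {0<..<t} (\<lambda>x. c * x - x * (f x / F) * (1 + ln c))"
        by (intro set_integral_diff(1) set_integrable_mult_right set_integrable_mult_left)
           (use muI[OF t] xI in \<open>simp_all add: F_def\<close>)
    qed (use pw in auto)
    also have "\<dots> = c * (t^2/2) - \<mu> * (1 + ln c)"
    proof -
      have A: "set_integrable lborel {0<..<t} (\<lambda>x. c * x)" using xI by simp
      have B: "set_integrable lborel {0<..<t} (\<lambda>x. x * (f x / F) * (1 + ln c))"
        unfolding F_def by (rule set_integrable_mult_left) (rule muI[OF t])
      have "(LINT x:{0<..<t}|lborel. c * x - x * (f x / F) * (1 + ln c))
          = (LINT x:{0<..<t}|lborel. c * x) - (LINT x:{0<..<t}|lborel. x * (f x / F) * (1 + ln c))"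
        by (rule set_integral_diff(2)[OF A B])
      also have "\<dots> = c * (LINT x:{0<..<t}|lborel. x) - (LINT x:{0<..<t}|lborel. x * (f x / F)) * (1 + ln c)"
        by (simp only: set_integral_mult_right set_integral_mult_left)
      finally show ?thesis using int_x(2)[OF t0] by (simp add: F_def \<mu>_def mean_past_def)
    qed
    also have "\<dots> = \<mu> * ln (t\<^sup>2 / (2 * \<mu>))"
      using t0 mu0 by (simp add: c_def ln_div field_simps)
    finally show ?thesis by (simp add: \<mu>_def)
  qed
  have part2: "wpast_entropy f t \<le> (LINT x:{0<..<t}|lborel. x * rhr f x) - mean_past f t * (1 + ln (rhr f t))"
    if mono: "\<forall>s t. in_supp \<nu> s \<and> in_supp \<nu> t \<and> s \<le> t \<longrightarrow> rhr f t \<le> rhr f s"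
      and t: "in_supp \<nu> t" and hI: "set_integrable lborel {0<..<t} (\<lambda>x. x * (f x / cdf f t) * ln (f x / cdf f t))"
      and rI: "set_integrable lborel {0<..<t} (\<lambda>x. x * rhr f x)" for t
  proof -
    define F where "F = cdf f t"
    define \<mu> where "\<mu> = mean_past f t"
    define b where "b = rhr f t"
    have t0: "0 < t" using t by (simp add: in_supp_def)
    have F0: "0 < F" using Fpos[OF t] by (simp add: F_def)
    have b0: "0 < b" unfolding b_def rhr_def using Fpos[OF t] f_pos[OF t] by simp
    have pw: "- (x * (f x / F) * ln (f x / F)) \<le> x * rhr f x - x * (f x / F) * (1 + ln b)"
      if x: "x \<in> {0<..<t}" for x
    proof -
      have xs: "in_supp \<nu> x" using x by (auto intro!: supp_le[OF t])
      define g where "g = f x / F"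
      define Fx where "Fx = cdf f x"
      have fx0: "0 < f x" using f_pos[OF xs] .
      have Fx0: "0 < Fx" using Fpos[OF xs] by (simp add: Fx_def)
      have g0: "0 < g" unfolding g_def using F0 fx0 by simp
      have ab: "b \<le> f x / Fx" using mono xs t x unfolding b_def rhr_def Fx_def by auto
      have "ln b \<le> ln (f x / Fx)" using ab b0 by simp
      then have l1: "ln b \<le> ln (f x) - ln Fx" using fx0 Fx0 by (simp add: ln_div)
      have "ln (F / Fx) \<le> F / Fx - 1" using F0 Fx0 by (intro ln_le_minus_one) simp
      then have l2: "ln F - ln Fx \<le> F / Fx - 1" using F0 Fx0 by (simp add: ln_div)
      have lg: "ln g = ln (f x) - ln F" unfolding g_def using fx0 F0 by (simp add: ln_div)
      have "- ln g \<le> F / Fx - 1 - ln b" using l1 l2 lg by linarith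
      then have "x * g * (- ln g) \<le> x * g * (F / Fx - 1 - ln b)"
        using x g0 by (intro mult_left_mono) auto
      moreover have "x * g * (F / Fx) = x * rhr f x"
        unfolding g_def rhr_def Fx_def using F0 by simp
      ultimately show ?thesis unfolding g_def[symmetric] by (simp add: algebra_simps)
    qed
    have "wpast_entropy f t = (LINT x:{0<..<t}|lborel. - (x * (f x / F) * ln (f x / F)))"
      unfolding wpast_entropy_def F_def using hI by (simp add: set_integral_uminus)
    also have "\<dots> \<le> (LINT x:{0<..<t}|lborel. x * rhr f x - x * (f x / F) * (1 + ln b))"
    proof (rule set_integral_mono)
      show "set_integrable lborel {0<..<t} (\<lambda>x. - (x * (f x / F) * ln (f x / F)))"
        using set_integrable_mult_right[of "-1", OF hI] by (simp add: F_def)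
      show "set_integrable lborel {0<..<t} (\<lambda>x. x * rhr f x - x * (f x / F) * (1 + ln b))"
        by (intro set_integral_diff(1) set_integrable_mult_left)
           (use muI[OF t] rI in \<open>simp_all add: F_def\<close>)
    qed (use pw in auto)
    also have "\<dots> = (LINT x:{0<..<t}|lborel. x * rhr f x) - \<mu> * (1 + ln b)"
    proof -
      have B: "set_integrable lborel {0<..<t} (\<lambda>x. x * (f x / F) * (1 + ln b))"
        unfolding F_def by (rule set_integrable_mult_left) (rule muI[OF t])
      have "(LINT x:{0<..<t}|lborel. x * rhr f x - x * (f x / F) * (1 + ln b))
          = (LINT x:{0<..<t}|lborel. x * rhr f x) - (LINT x:{0<..<t}|lborel. x * (f x / F) * (1 + ln b))"
        by (rule set_integral_diff(2)[OF rI B])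
      also have "\<dots> = (LINT x:{0<..<t}|lborel. x * rhr f x) - (LINT x:{0<..<t}|lborel. x * (f x / F)) * (1 + ln b)"
        by (simp only: set_integral_mult_left)
      finally show ?thesis by (simp add: F_def \<mu>_def mean_past_def)
    qed
    finally show ?thesis by (simp add: \<mu>_def b_def)
  qed
  show ?thesis using part1 part2 by blast
qed

theorem theorem3p4:
  fixes f :: "real \<Rightarrow> real" and \<nu> :: ereal
  assumes nu_pos: "0 < \<nu>"
    and f_meas: "f \<in> borel_measurable borel"
    and f_nonneg: "\<And>x. 0 \<le> f x"
    and f_pos: "\<And>x. in_supp \<nu> x \<Longrightarrow> 0 < f x"
    and f_zero: "\<And>x. \<not> in_supp \<nu> x \<Longrightarrow> f x = 0"
    and f_int: "integrable lborel f"
    and f_total: "integral\<^sup>L lborel f = 1"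
  shows
    "(\<forall>t. in_supp \<nu> t \<and>
          set_integrable lborel {0<..<t} (\<lambda>x. x * (f x / cdf f t) * ln (f x / cdf f t))
        \<longrightarrow> wpast_entropy f t \<le> mean_past f t * ln (t\<^sup>2 / (2 * mean_past f t)))
     \<and>
     ((\<forall>s t. in_supp \<nu> s \<and> in_supp \<nu> t \<and> s \<le> t \<longrightarrow> rhr f t \<le> rhr f s) \<longrightarrow>
      (\<forall>t. in_supp \<nu> t \<and>
          set_integrable lborel {0<..<t} (\<lambda>x. x * (f x / cdf f t) * ln (f x / cdf f t)) \<and>
          set_integrable lborel {0<..<t} (\<lambda>x. x * rhr f x)
        \<longrightarrow> wpast_entropy f t \<le>
              (LINT x:{0<..<t}|lborel. x * rhr f x) - mean_past f t * (1 + ln (rhr f t))))"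
  using main[OF f_meas f_nonneg f_pos f_int] .

end
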